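(* For $a>0$ and $b\in\mathbb{R}$ let $h_{a+ib}(x)=e^{-\pi(a+ib)|x|^2}$, $x\in\mathbb{R}^d$. Then for all $1\le p,q\le\infty$, $$\|h_{a+ib}\|_{M^{p,q}}\asymp \frac{\big((a+1)^2+b^2\big)^{\frac d2\left(\frac1p-\frac12\right)}}{a^{\frac{d}{2q}}\big(a(a+1)+b^2\big)^{\frac d2\left(\frac1p-\frac1q\right)}},$$ where $\asymp$ means that each side is bounded by a constant times the other, with constants independent of $a$ and $b$.
   Context: For $f\in\mathcal S'(\mathbb{R}^d)$ and a window $g\in\mathcal S(\mathbb{R}^d)\setminus\{0\}$, $V_gf(x,\omega)=\int f(y)\overline{g(y-x)}e^{-2\pi i y\cdot\omega}\,dy$. For $1\le p,q\le\infty$, $M^{p,q}(\mathbb{R}^d)$ is the space of $f\in\mathcal S'(\mathbb{R}^d)$ with $\|f\|_{M^{p,q}}=\big(\int(\int|V_gf(x,\omega)|^p dx)^{q/p}d\omega\big)^{1/q}<\infty$ (usual modifications if $p$ or $q=\infty$), independent of $g$ up to equivalent norms. *)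

theory Defs
  imports "HOL-Analysis.Analysis"
begin

text \<open>Real powers of extended nonnegative reals (used only with r > 0): infinity stays infinity.\<close>
definition epow :: "ennreal \<Rightarrow> real \<Rightarrow> ennreal" where
  "epow t r = (if t = \<infinity> then \<infinity> else ennreal (enn2real t powr r))"

definition Lp_norm :: "ennreal \<Rightarrow> ('a::euclidean_space \<Rightarrow> ennreal) \<Rightarrow> ennreal" where
  "Lp_norm p F =
     (if p = \<infinity> then Inf {c. AE x in lborel. F x \<le> c}
      else epow (\<integral>\<^sup>+ x. epow (F x) (enn2real p) \<partial>lborel) (1 / enn2real p))"

definition stft :: "('a::euclidean_space \<Rightarrow> complex) \<Rightarrow> ('a \<Rightarrow> complex) \<Rightarrow> 'a \<Rightarrow> 'a \<Rightarrow> complex" where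
  "stft g f x \<omega> = (\<integral> y. f y * cnj (g (y - x)) * cis (- 2 * pi * (y \<bullet> \<omega>)) \<partial>lborel)"

definition mod_norm :: "ennreal \<Rightarrow> ennreal \<Rightarrow> ('a::euclidean_space \<Rightarrow> complex) \<Rightarrow> ('a \<Rightarrow> complex) \<Rightarrow> ennreal" where
  "mod_norm p q g f = Lp_norm q (\<lambda>\<omega>. Lp_norm p (\<lambda>x. ennreal (cmod (stft g f x \<omega>))))"

definition gauss_window :: "'a::euclidean_space \<Rightarrow> complex" where
  "gauss_window x = complex_of_real (exp (- pi * norm x ^ 2))"

definition gauss_chirp :: "real \<Rightarrow> real \<Rightarrow> 'a::euclidean_space \<Rightarrow> complex" where
  "gauss_chirp a b x = exp (- (complex_of_real pi * Complex a b) * complex_of_real (norm x ^ 2))"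

end

theory Submission imports Defs "HOL-Probability.Probability" begin


lemma gauss_real:
  fixes A B :: real assumes A: "A > 0"
  shows "has_bochner_integral lborel (\<lambda>u. exp (- A * u\<^sup>2 + B * u)) (sqrt (pi / A) * exp (B\<^sup>2 / (4 * A)))"
proof -
  define m where "m = B / (2 * A)"
  define s where "s = 1 / sqrt (2 * A)"
  have s2: "s\<^sup>2 = 1 / (2 * A)" using A by (simp add: s_def power_divide)
  have eq: "exp (- A * u\<^sup>2 + B * u) = (sqrt (pi / A) * exp (B\<^sup>2 / (4 * A))) * normal_density m s u" for u
  proof -
    have "sqrt (2 * pi * s\<^sup>2) = sqrt (pi / A)" using s2 by simp
    moreover have "- A * u\<^sup>2 + B * u = B\<^sup>2 / (4 * A) + (-(u - m)\<^sup>2/ (2 * s\<^sup>2))"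
      using A unfolding s2 m_def by (simp add: field_simps power2_eq_square)
    moreover have "sqrt (pi / A) > 0" using A by simp
    ultimately show ?thesis using A unfolding normal_density_def by (simp add: exp_add[symmetric])
  qed
  have "has_bochner_integral lborel (\<lambda>u. (sqrt (pi / A) * exp (B\<^sup>2 / (4 * A))) * normal_density m s u) ((sqrt (pi / A) * exp (B\<^sup>2 / (4 * A))) * 1)"
    using A by (intro has_bochner_integral_mult_right) (simp add: has_bochner_integral_iff s_def)
  then show ?thesis unfolding eq by simp
qed

lemma char_std_normal_lborel:
  "(\<integral>x. std_normal_density x *\<^sub>R cis (t * x) \<partial>lborel) = complex_of_real (exp (- (t^2) / 2))"
proof -
  have "char std_normal_distribution t = complex_of_real (exp (- (t^2) / 2))"
    by (simp add: char_std_normal_distribution)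
  moreover have "char std_normal_distribution t = (\<integral>x. std_normal_density x *\<^sub>R cis (t * x) \<partial>lborel)"
    unfolding char_def by (subst integral_density) (auto simp: cis_conv_exp mult.commute)
  ultimately show ?thesis by simp
qed

lemma meas_cplx_gauss[measurable]:
  "(\<lambda>u::real. complex_of_real (exp (- A * u\<^sup>2 + B * u)) * cis (C * u)) \<in> borel_measurable borel"
  by (intro borel_measurable_continuous_onI continuous_intros)

lemma meas_cplx_gauss'[measurable]:
  "(\<lambda>u::real. complex_of_real (exp (- A * u\<^sup>2 + B * u)) * cis (C * u)) \<in> borel_measurable lborel"
  using meas_cplx_gauss by simp

lemma gauss_cplx:
  fixes A B C :: real assumes A: "A > 0"
  shows "has_bochner_integral lborel (\<lambda>u. complex_of_real (exp (- A * u\<^sup>2 + B * u)) * cis (C * u))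
     (complex_of_real (sqrt (pi / A) * exp ((B\<^sup>2 - C\<^sup>2) / (4 * A))) * cis (B * C / (2 * A)))"
proof -
  define F where "F = (\<lambda>u. complex_of_real (exp (- A * u\<^sup>2 + B * u)) * cis (C * u))"
  define m where "m = B / (2 * A)"
  define s where "s = 1 / sqrt (2 * A)"
  have s0: "s > 0" using A by (simp add: s_def)
  have s2: "s\<^sup>2 = 1 / (2 * A)" using A by (simp add: s_def power_divide)
  have int: "integrable lborel F"
  proof -
    have "integrable lborel (\<lambda>u. norm (F u))"
      using gauss_real[OF A, of B] by (simp add: F_def norm_mult has_bochner_integral_iff)
    then show ?thesis using integrable_norm_iff[OF meas_cplx_gauss'[of A B C]] by (simp add: F_def)
  qed
  define K where "K = complex_of_real (exp (B\<^sup>2 / (4 * A)) * sqrt (2 * pi)) * cis (C * m)"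
  have eq: "F (m + s * x) = K * (std_normal_density x *\<^sub>R cis ((C * s) * x))" for x
  proof -
    have e: "- A * (m + s * x)\<^sup>2 + B * (m + s * x) = B\<^sup>2 / (4 * A) + (- x\<^sup>2 / 2)"
      using A s2 unfolding m_def by (simp add: field_simps power2_eq_square)
    have c: "cis (C * (m + s * x)) = cis (C * m) * cis (C * s * x)"
      by (simp add: cis_mult algebra_simps)
    have e': "exp (- A * (m + s * x)\<^sup>2 + B * (m + s * x)) = exp (B\<^sup>2/(4*A)) * exp (- x\<^sup>2 / 2)"
      unfolding e exp_add ..
    show ?thesis unfolding F_def K_def std_normal_density_def e' c
      by (simp add: scaleR_conv_of_real)
  qed
  have "integral\<^sup>L lborel F = \<bar>s\<bar> *\<^sub>R (\<integral>x. F (m + s * x) \<partial>lborel)"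
    using s0 by (intro lborel_integral_real_affine) simp
  also have "\<dots> = s *\<^sub>R (K * (\<integral>x. std_normal_density x *\<^sub>R cis ((C * s) * x) \<partial>lborel))"
    using s0 by (simp only: eq integral_mult_right_zero abs_of_pos)
  also have "\<dots> = s *\<^sub>R (K * complex_of_real (exp (- ((C * s)^2) / 2)))"
    by (simp only: char_std_normal_lborel)
  also have "\<dots> = complex_of_real (sqrt (pi / A) * exp ((B\<^sup>2 - C\<^sup>2) / (4 * A))) * cis (B * C / (2 * A))"
  proof -
    have 1: "s * sqrt (2 * pi) = sqrt (pi / A)" using A
      by (simp add: s_def real_sqrt_divide real_sqrt_mult field_simps)
    have 2: "exp (B\<^sup>2 / (4 * A)) * exp (- ((C * s)^2) / 2) = exp ((B\<^sup>2 - C\<^sup>2) / (4 * A))"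
      using A s2 by (simp add: exp_add[symmetric] power_mult_distrib field_simps)
    have 3: "C * m = B * C / (2 * A)" by (simp add: m_def)
    have "s *\<^sub>R (K * complex_of_real (exp (- ((C * s)^2) / 2))) =
       complex_of_real ((s * sqrt (2 * pi)) * (exp (B\<^sup>2 / (4 * A)) * exp (- ((C * s)^2) / 2))) * cis (C * m)"
      unfolding K_def by (simp add: scaleR_conv_of_real algebra_simps)
    then show ?thesis unfolding 1 2 3 .
  qed
  finally show ?thesis using int unfolding F_def has_bochner_integral_iff by simp
qed

lemma cnj_measurable[measurable]: "(cnj :: complex \<Rightarrow> complex) \<in> borel_measurable borel"
  by (intro borel_measurable_continuous_onI continuous_intros)

lemma chirp_prod_integrable:
  fixes \<alpha> B :: real and f :: "real \<Rightarrow> complex"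
  assumes a: "\<alpha> > 0" and fm: "f \<in> borel_measurable borel" and nf: "\<And>t. norm (f t) = exp (- \<alpha> * t\<^sup>2 + B * t)"
  shows "integrable (lborel \<Otimes>\<^sub>M lborel) (\<lambda>(x, v). f x * cnj (f (x + -2 * v)))"
proof -
  note fm[measurable]
  define e where "e = (\<lambda>t. exp (- \<alpha> * t\<^sup>2 + B * t))"
  have em[measurable]: "e \<in> borel_measurable borel" unfolding e_def by measurable
  obtain I where I: "has_bochner_integral lborel e I" using gauss_real[OF a, of B] unfolding e_def by blast
  have eI: "(\<integral>\<^sup>+t. ennreal (e t) \<partial>lborel) = ennreal I"
    using I by (subst nn_integral_eq_integral) (auto simp: has_bochner_integral_iff e_def)
  have inner: "(\<integral>\<^sup>+v. ennreal (e x * e (x + -2 * v)) \<partial>lborel) = ennreal (e x) * ennreal (I / 2)" for x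
  proof -
    have ie: "integrable lborel e" using I by (simp add: has_bochner_integral_iff)
    have i2: "integrable lborel (\<lambda>v. e (x + -2 * v))"
      by (rule lborel_integrable_real_affine[OF ie]) simp
    have "integral\<^sup>L lborel e = \<bar>-2\<bar> *\<^sub>R (\<integral>v. e (x + -2 * v) \<partial>lborel)"
      by (rule lborel_integral_real_affine) simp
    then have "(\<integral>v. e (x + -2 * v) \<partial>lborel) = I / 2" using I by (simp add: has_bochner_integral_iff)
    then have "(\<integral>\<^sup>+v. ennreal (e (x + -2 * v)) \<partial>lborel) = ennreal (I / 2)"
      using i2 by (subst nn_integral_eq_integral) (auto simp: e_def)
    moreover have "(\<integral>\<^sup>+v. ennreal (e x * e (x + -2 * v)) \<partial>lborel) = ennreal (e x) * (\<integral>\<^sup>+v. ennreal (e (x + -2 * v)) \<partial>lborel)"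
      by (subst nn_integral_cmult[symmetric]) (auto simp: ennreal_mult e_def)
    ultimately show ?thesis by simp
  qed
  have meas: "(\<lambda>(x, v). f x * cnj (f (x + -2 * v))) \<in> borel_measurable (lborel \<Otimes>\<^sub>M lborel)"
    by measurable
  have "(\<integral>\<^sup>+z. ennreal (norm ((\<lambda>(x, v). f x * cnj (f (x + -2 * v))) z)) \<partial>(lborel \<Otimes>\<^sub>M lborel))
      = (\<integral>\<^sup>+x. \<integral>\<^sup>+v. ennreal (e x * e (x + -2 * v)) \<partial>lborel \<partial>lborel)"
    by (subst lborel.nn_integral_fst[symmetric]) (auto simp: nf e_def norm_mult)
  also have "\<dots> = (\<integral>\<^sup>+x. ennreal (e x) * ennreal (I / 2) \<partial>lborel)" by (simp only: inner)
  also have "\<dots> = ennreal I * ennreal (I / 2)"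
    by (subst nn_integral_multc) (auto simp: eI)
  also have "\<dots> < \<infinity>" by (simp add: ennreal_mult_less_top)
  finally show ?thesis using meas by (subst integrable_iff_bounded) simp
qed

lemma chirp_int:
  fixes \<alpha> \<beta> B C :: real assumes a: "\<alpha> > 0"
  shows "integrable lborel (\<lambda>t. complex_of_real (exp (- \<alpha> * t\<^sup>2 + B * t)) * cis (- \<beta> * t\<^sup>2 + C * t))"
    and "(cmod (\<integral>t. complex_of_real (exp (- \<alpha> * t\<^sup>2 + B * t)) * cis (- \<beta> * t\<^sup>2 + C * t) \<partial>lborel))\<^sup>2
       = 2 * sqrt (pi / (2 * \<alpha>)) * exp (B\<^sup>2 / (2 * \<alpha>)) *
         (sqrt (pi / (2 * \<alpha> + 2 * \<beta>\<^sup>2 / \<alpha>)) * exp ((0\<^sup>2 - (2 * C - 2 * \<beta> * B / \<alpha>)\<^sup>2) / (4 * (2 * \<alpha> + 2 * \<beta>\<^sup>2 / \<alpha>))))"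
proof -
  define f where "f = (\<lambda>t. complex_of_real (exp (- \<alpha> * t\<^sup>2 + B * t)) * cis (- \<beta> * t\<^sup>2 + C * t))"
  have fm[measurable]: "f \<in> borel_measurable borel" unfolding f_def
    by (intro borel_measurable_continuous_onI continuous_intros)
  have nf: "norm (f t) = exp (- \<alpha> * t\<^sup>2 + B * t)" for t by (simp add: f_def norm_mult)
  have intf: "integrable lborel f"
  proof -
    have "integrable lborel (\<lambda>u. norm (f u))"
      using gauss_real[OF a, of B] by (simp add: nf has_bochner_integral_iff)
    then show ?thesis using integrable_norm_iff[of f lborel] fm by simp
  qed
  then show "integrable lborel (\<lambda>t. complex_of_real (exp (- \<alpha> * t\<^sup>2 + B * t)) * cis (- \<beta> * t\<^sup>2 + C * t))"
    unfolding f_def .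
  define T where "T = integral\<^sup>L lborel f"
  define G where "G = (\<lambda>x v. f x * cnj (f (x + -2 * v)))"
  have "T * cnj T = (\<integral>x. f x * cnj T \<partial>lborel)" unfolding T_def by simp
  also have "\<dots> = (\<integral>x. (\<integral>y. f x * cnj (f y) \<partial>lborel) \<partial>lborel)" unfolding T_def by simp
  also have "\<dots> = (\<integral>x. 2 *\<^sub>R (\<integral>v. G x v \<partial>lborel) \<partial>lborel)"
  proof (intro Bochner_Integration.integral_cong refl)
    fix x
    show "(\<integral>y. f x * cnj (f y) \<partial>lborel) = 2 *\<^sub>R (\<integral>v. G x v \<partial>lborel)"
      unfolding G_def by (subst lborel_integral_real_affine[where c="-2" and t=x]) auto
  qed
  also have "\<dots> = 2 *\<^sub>R (\<integral>x. (\<integral>v. G x v \<partial>lborel) \<partial>lborel)" by simp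
  also have "(\<integral>x. (\<integral>v. G x v \<partial>lborel) \<partial>lborel) = (\<integral>v. (\<integral>x. G x v \<partial>lborel) \<partial>lborel)"
    by (rule lborel_pair.Fubini_integral[symmetric])
       (unfold G_def, rule chirp_prod_integrable[OF a fm nf])
  also have "\<dots> = (\<integral>v. complex_of_real (sqrt (pi / (2 * \<alpha>)) * exp (B\<^sup>2 / (2 * \<alpha>))) *
      (complex_of_real (exp (- (2 * \<alpha> + 2 * \<beta>\<^sup>2 / \<alpha>) * v\<^sup>2 + 0 * v)) * cis ((2 * C - 2 * \<beta> * B / \<alpha>) * v)) \<partial>lborel)"
  proof (intro Bochner_Integration.integral_cong refl)
    fix v
    have e5: "G (v + 1 * u) v = (complex_of_real (exp (- 2 * \<alpha> * v\<^sup>2)) * cis (2 * C * v)) *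
         (complex_of_real (exp (- (2 * \<alpha>) * u\<^sup>2 + (2 * B) * u)) * cis ((- 4 * \<beta> * v) * u))" for u
    proof -
      have "G (v + 1 * u) v = complex_of_real (exp (- \<alpha> * (v + u)\<^sup>2 + B * (v + u)) * exp (- \<alpha> * (u - v)\<^sup>2 + B * (u - v)))
          * (cis (- \<beta> * (v + u)\<^sup>2 + C * (v + u)) * cis (\<beta> * (u - v)\<^sup>2 - C * (u - v)))"
        unfolding G_def f_def by (simp add: cis_cnj algebra_simps)
      also have "\<dots> = complex_of_real (exp (- 2 * \<alpha> * v\<^sup>2) * exp (- (2 * \<alpha>) * u\<^sup>2 + (2 * B) * u))
          * (cis (2 * C * v) * cis ((- 4 * \<beta> * v) * u))"
        unfolding exp_add[symmetric] cis_mult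
        by (intro arg_cong2[where f="(*)"] arg_cong[where f=complex_of_real] arg_cong[where f=exp] arg_cong[where f=cis])
           (simp_all add: power2_eq_square algebra_simps)
      finally show ?thesis by (simp add: algebra_simps)
    qed
    have "(\<integral>x. G x v \<partial>lborel) = \<bar>1\<bar> *\<^sub>R (\<integral>u. G (v + 1 * u) v \<partial>lborel)"
      by (rule lborel_integral_real_affine) simp
    also have "\<dots> = (complex_of_real (exp (- 2 * \<alpha> * v\<^sup>2)) * cis (2 * C * v)) *
        (complex_of_real (sqrt (pi / (2 * \<alpha>)) * exp (((2 * B)\<^sup>2 - (- 4 * \<beta> * v)\<^sup>2) / (4 * (2 * \<alpha>)))) * cis ((2 * B) * (- 4 * \<beta> * v) / (2 * (2 * \<alpha>))))"
      unfolding e5 using a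
      by (simp only: abs_one scaleR_one integral_mult_right_zero has_bochner_integral_integral_eq[OF gauss_cplx])
    also have "\<dots> = complex_of_real (sqrt (pi / (2 * \<alpha>)) * exp (B\<^sup>2 / (2 * \<alpha>))) *
      (complex_of_real (exp (- (2 * \<alpha> + 2 * \<beta>\<^sup>2 / \<alpha>) * v\<^sup>2 + 0 * v)) * cis ((2 * C - 2 * \<beta> * B / \<alpha>) * v))"
    proof -
      have ee: "exp (- 2 * \<alpha> * v\<^sup>2) * exp (((2 * B)\<^sup>2 - (- 4 * \<beta> * v)\<^sup>2) / (4 * (2 * \<alpha>)))
          = exp (B\<^sup>2 / (2 * \<alpha>)) * exp (- (2 * \<alpha> + 2 * \<beta>\<^sup>2 / \<alpha>) * v\<^sup>2 + 0 * v)"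
        unfolding exp_add[symmetric] using a by (intro arg_cong[where f=exp]) (simp add: field_simps power2_eq_square)
      have cc: "cis (2 * C * v) * cis ((2 * B) * (- 4 * \<beta> * v) / (2 * (2 * \<alpha>))) = cis ((2 * C - 2 * \<beta> * B / \<alpha>) * v)"
        unfolding cis_mult using a by (intro arg_cong[where f=cis]) (simp add: field_simps)
      show ?thesis
        using ee cc by (simp add: algebra_simps of_real_mult[symmetric] del: of_real_mult)
    qed
    finally show "(\<integral>x. G x v \<partial>lborel) = complex_of_real (sqrt (pi / (2 * \<alpha>)) * exp (B\<^sup>2 / (2 * \<alpha>))) *
      (complex_of_real (exp (- (2 * \<alpha> + 2 * \<beta>\<^sup>2 / \<alpha>) * v\<^sup>2 + 0 * v)) * cis ((2 * C - 2 * \<beta> * B / \<alpha>) * v))" .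
  qed
  also have "\<dots> = complex_of_real (sqrt (pi / (2 * \<alpha>)) * exp (B\<^sup>2 / (2 * \<alpha>))) *
     (complex_of_real (sqrt (pi / (2 * \<alpha> + 2 * \<beta>\<^sup>2 / \<alpha>)) * exp ((0\<^sup>2 - (2 * C - 2 * \<beta> * B / \<alpha>)\<^sup>2) / (4 * (2 * \<alpha> + 2 * \<beta>\<^sup>2 / \<alpha>)))) * cis (0 * (2 * C - 2 * \<beta> * B / \<alpha>) / (2 * (2 * \<alpha> + 2 * \<beta>\<^sup>2 / \<alpha>))))"
  proof -
    have "2 * \<alpha> + 2 * \<beta>\<^sup>2 / \<alpha> > 0" using a by (simp add: add_pos_nonneg)
    then show ?thesis
      by (simp only: integral_mult_right_zero has_bochner_integral_integral_eq[OF gauss_cplx])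
  qed
  finally have "T * cnj T = complex_of_real (2 * sqrt (pi / (2 * \<alpha>)) * exp (B\<^sup>2 / (2 * \<alpha>)) *
         (sqrt (pi / (2 * \<alpha> + 2 * \<beta>\<^sup>2 / \<alpha>)) * exp ((0\<^sup>2 - (2 * C - 2 * \<beta> * B / \<alpha>)\<^sup>2) / (4 * (2 * \<alpha> + 2 * \<beta>\<^sup>2 / \<alpha>)))))"
    by (simp add: scaleR_conv_of_real)
  then show "(cmod (\<integral>t. complex_of_real (exp (- \<alpha> * t\<^sup>2 + B * t)) * cis (- \<beta> * t\<^sup>2 + C * t) \<partial>lborel))\<^sup>2
       = 2 * sqrt (pi / (2 * \<alpha>)) * exp (B\<^sup>2 / (2 * \<alpha>)) *
         (sqrt (pi / (2 * \<alpha> + 2 * \<beta>\<^sup>2 / \<alpha>)) * exp ((0\<^sup>2 - (2 * C - 2 * \<beta> * B / \<alpha>)\<^sup>2) / (4 * (2 * \<alpha> + 2 * \<beta>\<^sup>2 / \<alpha>))))"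
    unfolding complex_norm_square[symmetric] T_def[symmetric] f_def[symmetric] of_real_eq_iff .
qed

definition phi1 :: "real \<Rightarrow> real \<Rightarrow> real \<Rightarrow> real \<Rightarrow> real \<Rightarrow> complex" where
  "phi1 a b x0 w t = complex_of_real (exp (- (pi * (a + 1)) * t\<^sup>2 + (2 * pi * x0) * t)) * cis (- (pi * b) * t\<^sup>2 + (-2 * pi * w) * t)
     * complex_of_real (exp (- pi * x0\<^sup>2))"

lemma phi1_int:
  assumes a: "a > 0"
  shows "integrable lborel (phi1 a b x0 w)"
  unfolding phi1_def
  by (intro integrable_mult_left chirp_int(1)) (use a in simp)


lemma phi1_cmod:
  assumes a: "a > 0"
  shows "cmod (integral\<^sup>L lborel (phi1 a b x0 w)) =
    ((a + 1)\<^sup>2 + b\<^sup>2) powr (-1/4) * exp (- pi * a / (a * (a + 1) + b\<^sup>2) * w\<^sup>2)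
     * exp (- pi * (a * (a + 1) + b\<^sup>2) / ((a + 1)\<^sup>2 + b\<^sup>2) * (x0 + b / (a * (a + 1) + b\<^sup>2) * w)\<^sup>2)"
proof -
  define \<alpha> where "\<alpha> = pi * (a + 1)"
  define \<beta> where "\<beta> = pi * b"
  define B where "B = 2 * pi * x0"
  define C where "C = -2 * pi * w"
  define D where "D = (a + 1)\<^sup>2 + b\<^sup>2"
  define A where "A = a * (a + 1) + b\<^sup>2"
  have al: "\<alpha> > 0" using a by (simp add: \<alpha>_def)
  have D0: "D > 0" using a by (simp add: D_def add_pos_nonneg)
  have A0: "A > 0" using a by (simp add: A_def add_pos_nonneg)
  define P1 where "P1 = sqrt (pi / (2 * \<alpha>))"
  define P2 where "P2 = sqrt (pi / (2 * \<alpha> + 2 * \<beta>\<^sup>2 / \<alpha>))"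
  define E1 where "E1 = B\<^sup>2 / (2 * \<alpha>)"
  define E2 where "E2 = (0\<^sup>2 - (2 * C - 2 * \<beta> * B / \<alpha>)\<^sup>2) / (4 * (2 * \<alpha> + 2 * \<beta>\<^sup>2 / \<alpha>))"
  define Z where "Z = - pi * x0\<^sup>2"
  have "integral\<^sup>L lborel (phi1 a b x0 w) = (\<integral>t. complex_of_real (exp (- \<alpha> * t\<^sup>2 + B * t)) * cis (- \<beta> * t\<^sup>2 + C * t) \<partial>lborel) * complex_of_real (exp Z)"
    unfolding phi1_def \<alpha>_def \<beta>_def B_def C_def Z_def by simp
  then have "(cmod (integral\<^sup>L lborel (phi1 a b x0 w)))\<^sup>2 =
     (cmod (\<integral>t. complex_of_real (exp (- \<alpha> * t\<^sup>2 + B * t)) * cis (- \<beta> * t\<^sup>2 + C * t) \<partial>lborel))\<^sup>2 * (exp Z)\<^sup>2"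
    by (simp only: norm_mult power_mult_distrib norm_of_real abs_of_pos[OF exp_gt_zero])
  also have "\<dots> = (2 * P1 * exp E1 * (P2 * exp E2)) * (exp Z)\<^sup>2"
    unfolding P1_def P2_def E1_def E2_def by (simp only: chirp_int(2)[OF al])
  also have "\<dots> = (2 * (P1 * P2)) * exp (E1 + E2 + 2 * Z)"
  proof -
    have "exp (E1 + E2 + 2 * Z) = exp E1 * exp E2 * (exp Z)\<^sup>2"
      by (metis exp_add mult_2 power2_eq_square)
    then show ?thesis by simp
  qed
  also have "2 * (P1 * P2) = D powr (-1/2)"
  proof -
    have h1: "pi / (2*\<alpha>) * (pi / (2*\<alpha> + 2*\<beta>\<^sup>2/\<alpha>)) = pi\<^sup>2 / (4*(\<alpha>\<^sup>2+\<beta>\<^sup>2))"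
      using al by (simp add: field_simps power2_eq_square)
    have h2: "\<alpha>\<^sup>2 + \<beta>\<^sup>2 = pi\<^sup>2 * D"
      unfolding \<alpha>_def \<beta>_def D_def power_mult_distrib by (simp only: distrib_left)
    have h3: "pi\<^sup>2 / (4 * (pi\<^sup>2 * D)) = (1/2)\<^sup>2 * (1 / D)" by (simp add: power2_eq_square)
    have "P1 * P2 = sqrt ((1/2)\<^sup>2 * (1 / D))"
      unfolding P1_def P2_def real_sqrt_mult[symmetric] h1 h2 h3 ..
    also have "\<dots> = 1/2 * sqrt (1 / D)" by (simp only: real_sqrt_mult real_sqrt_abs)
    finally have "2 * (P1 * P2) = sqrt (1 / D)" by simp
    also have "\<dots> = D powr (-1/2)"
      using D0 by (simp add: powr_half_sqrt[symmetric] powr_divide powr_minus_divide)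
    finally show ?thesis .
  qed
  also have "E1 + E2 + 2 * Z = 2 * (- pi * a / A * w\<^sup>2 + - pi * A / D * (x0 + b / A * w)\<^sup>2)"
  proof -
    have a1: "a + 1 > 0" using a by simp
    have e1: "E1 = 2*pi*x0\<^sup>2/(a+1)"
      unfolding E1_def B_def \<alpha>_def using a1 by (simp add: power2_eq_square divide_simps)
    have c1: "2 * C - 2 * \<beta> * B / \<alpha> = -4*pi*((a+1)*w + b*x0)/(a+1)"
      unfolding C_def \<beta>_def B_def \<alpha>_def using a1 by (simp add: divide_simps) (simp add: algebra_simps)
    have c2: "2 * \<alpha> + 2 * \<beta>\<^sup>2 / \<alpha> = 2*pi*D/(a+1)"
      unfolding \<beta>_def \<alpha>_def D_def using a1 by (simp add: divide_simps power2_eq_square) (simp add: algebra_simps)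
    have e2: "E2 = -2*pi*((a+1)*w + b*x0)\<^sup>2/((a+1)*D)"
      unfolding E2_def c1 c2 using a1 D0 by (simp add: divide_simps power2_eq_square)
    have key: "x0\<^sup>2/(a+1) - ((a+1)*w + b*x0)\<^sup>2/((a+1)*D) - x0\<^sup>2 = - (a / A * w\<^sup>2 + A / D * (x0 + b / A * w)\<^sup>2)"
    proof -
      have "A * (a+1) = a * D + b\<^sup>2" unfolding A_def D_def by (simp add: power2_eq_square algebra_simps)
      show ?thesis using a1 A0 D0
        unfolding A_def D_def by (simp add: divide_simps power2_eq_square) (simp add: algebra_simps)
    qed
    have "E1 + E2 + 2 * Z = 2*pi*(x0\<^sup>2/(a+1) - ((a+1)*w + b*x0)\<^sup>2/((a+1)*D) - x0\<^sup>2)"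
      unfolding e1 e2 Z_def by (simp add: algebra_simps)
    also have "\<dots> = 2*pi*(- (a / A * w\<^sup>2 + A / D * (x0 + b / A * w)\<^sup>2))" by (simp only: key)
    also have "\<dots> = 2 * (- pi * a / A * w\<^sup>2 + - pi * A / D * (x0 + b / A * w)\<^sup>2)" by (simp add: algebra_simps)
    finally show ?thesis .
  qed
  finally have sq0: "(cmod (integral\<^sup>L lborel (phi1 a b x0 w)))\<^sup>2 = D powr (-1/2) * exp (2 * (- pi * a / A * w\<^sup>2 + - pi * A / D * (x0 + b / A * w)\<^sup>2))" .
  have ex2: "\<And>X::real. exp (2 * X) = (exp X)\<^sup>2" by (metis exp_add mult_2 power2_eq_square)
  have dp: "(D powr (-1/4))\<^sup>2 = D powr (-1/2)" using D0 by (simp add: powr_power)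
  have sq: "(cmod (integral\<^sup>L lborel (phi1 a b x0 w)))\<^sup>2 = (D powr (-1/4) * exp (- pi * a / A * w\<^sup>2) * exp (- pi * A / D * (x0 + b / A * w)\<^sup>2))\<^sup>2"
    unfolding sq0 ex2 power_mult_distrib dp exp_add by (simp only: mult.assoc)
  show ?thesis unfolding D_def[symmetric] A_def[symmetric]
    by (rule power2_eq_imp_eq[OF sq]) auto
qed





lemma integral_lborel_prod:
  fixes f :: "'a::euclidean_space \<Rightarrow> real \<Rightarrow> complex"
  assumes int: "\<And>b. b \<in> Basis \<Longrightarrow> integrable lborel (f b)"
  shows "(\<integral>x. (\<Prod>b\<in>Basis. f b (x \<bullet> b)) \<partial>lborel) = (\<Prod>b\<in>Basis. integral\<^sup>L lborel (f b))"
proof -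
  interpret P: product_sigma_finite "\<lambda>_::'a. lborel::real measure"
    by (simp add: product_sigma_finite_def sigma_finite_lborel)
  have fm[measurable]: "\<And>b. b \<in> Basis \<Longrightarrow> f b \<in> borel_measurable borel"
    using int borel_measurable_integrable by fastforce
  have "(\<integral>x. (\<Prod>b\<in>Basis. f b (x \<bullet> b)) \<partial>lborel) =
     (\<integral>g. (\<Prod>b\<in>Basis. f b ((\<Sum>c\<in>Basis. g c *\<^sub>R c) \<bullet> b)) \<partial>(\<Pi>\<^sub>M b\<in>Basis. lborel))"
    by (subst lborel_eq) (rule integral_distr; measurable)
  also have "\<dots> = (\<integral>g. (\<Prod>b\<in>Basis. f b (g b)) \<partial>(\<Pi>\<^sub>M b\<in>Basis. lborel))"
    by (intro Bochner_Integration.integral_cong refl prod.cong) (simp_all add: inner_sum_left inner_Basis if_distrib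
        sum.delta cong: if_cong)
  also have "\<dots> = (\<Prod>b\<in>Basis. integral\<^sup>L lborel (f b))"
    by (rule P.product_integral_prod) (auto intro: int)
  finally show ?thesis .
qed

lemma cis_sum: "finite I \<Longrightarrow> (\<Prod>i\<in>I. cis (f i)) = cis (\<Sum>i\<in>I. f i)"
  by (induction I rule: finite_induct) (simp_all add: cis_mult add.commute)

lemma norm2_sum: "(norm (y::'a::euclidean_space))\<^sup>2 = (\<Sum>b\<in>Basis. (y \<bullet> b)\<^sup>2)"
  unfolding power2_norm_eq_inner by (subst euclidean_inner) (simp add: power2_eq_square)

lemma integrand_prod:
  fixes x y \<omega> :: "'a::euclidean_space"
  shows "gauss_chirp a b y * cnj (gauss_window (y - x)) * cis (- 2 * pi * (y \<bullet> \<omega>)) =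
    (\<Prod>e\<in>Basis. phi1 a b (x \<bullet> e) (\<omega> \<bullet> e) (y \<bullet> e))"
proof -
  define S1 where "S1 = (\<Sum>e\<in>Basis. - (pi * (a + 1)) * (y \<bullet> e)\<^sup>2 + (2 * pi * (x \<bullet> e)) * (y \<bullet> e) + (- pi * (x \<bullet> e)\<^sup>2))"
  define S2 where "S2 = (\<Sum>e\<in>Basis. - (pi * b) * (y \<bullet> e)\<^sup>2 + (-2 * pi * (\<omega> \<bullet> e)) * (y \<bullet> e))"
  have r: "(\<Prod>e\<in>Basis. phi1 a b (x \<bullet> e) (\<omega> \<bullet> e) (y \<bullet> e)) = complex_of_real (exp S1) * cis S2"
  proof -
    have pe: "phi1 a b (x \<bullet> e) (\<omega> \<bullet> e) (y \<bullet> e) = complex_of_real (exp (- (pi * (a + 1)) * (y \<bullet> e)\<^sup>2 + (2 * pi * (x \<bullet> e)) * (y \<bullet> e) + (- pi * (x \<bullet> e)\<^sup>2)))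
       * cis (- (pi * b) * (y \<bullet> e)\<^sup>2 + (-2 * pi * (\<omega> \<bullet> e)) * (y \<bullet> e))" for e
      unfolding phi1_def exp_add[of "_ + _"] by (simp only: of_real_mult mult_ac)
    show ?thesis unfolding pe prod.distrib S1_def S2_def
      by (simp only: of_real_prod[symmetric] exp_sum[OF finite_Basis, symmetric] cis_sum[OF finite_Basis])
  qed
  have ny: "(norm y)\<^sup>2 = (\<Sum>e\<in>Basis. (y \<bullet> e)\<^sup>2)" by (rule norm2_sum)
  have nyx: "(norm (y - x))\<^sup>2 = (\<Sum>e\<in>Basis. (y \<bullet> e - x \<bullet> e)\<^sup>2)" by (simp add: norm2_sum inner_diff_left)
  have yw: "y \<bullet> \<omega> = (\<Sum>e\<in>Basis. (y \<bullet> e) * (\<omega> \<bullet> e))" by (rule euclidean_inner)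
  have s1: "S1 = - pi * a * (norm y)\<^sup>2 + - pi * (norm (y - x))\<^sup>2"
    unfolding S1_def ny nyx by (simp add: sum_distrib_left sum.distrib[symmetric] power2_diff algebra_simps)
  have s2: "S2 = - pi * b * (norm y)\<^sup>2 + - 2 * pi * (y \<bullet> \<omega>)"
    unfolding S2_def ny yw by (simp add: sum_distrib_left sum.distrib[symmetric] algebra_simps)
  have l: "gauss_chirp a b y = complex_of_real (exp (- pi * a * (norm y)\<^sup>2)) * cis (- pi * b * (norm y)\<^sup>2)"
    unfolding gauss_chirp_def by (subst exp_eq_polar) simp
  have g: "cnj (gauss_window (y - x)) = complex_of_real (exp (- pi * (norm (y - x))\<^sup>2))"
    unfolding gauss_window_def by simp
  show ?thesis unfolding r l g s1 s2 exp_add cis_mult[symmetric]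
    by (simp only: of_real_mult mult_ac)
qed

lemma stft_cmod:
  fixes x \<omega> :: "'a::euclidean_space"
  assumes a: "a > 0"
  shows "cmod (stft gauss_window (gauss_chirp a b) x \<omega>) =
    ((a + 1)\<^sup>2 + b\<^sup>2) powr (- real DIM('a) / 4) * exp (- pi * a / (a * (a + 1) + b\<^sup>2) * (norm \<omega>)\<^sup>2)
     * exp (- pi * (a * (a + 1) + b\<^sup>2) / ((a + 1)\<^sup>2 + b\<^sup>2) * (norm (x + (b / (a * (a + 1) + b\<^sup>2)) *\<^sub>R \<omega>))\<^sup>2)"
proof -
  define D where "D = (a + 1)\<^sup>2 + b\<^sup>2"
  define A where "A = a * (a + 1) + b\<^sup>2"
  have D0: "D > 0" using a by (simp add: D_def add_pos_nonneg)
  have "stft gauss_window (gauss_chirp a b) x \<omega> = (\<integral>y. (\<Prod>e\<in>Basis. phi1 a b (x \<bullet> e) (\<omega> \<bullet> e) (y \<bullet> e)) \<partial>lborel)"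
    unfolding stft_def integrand_prod ..
  also have "\<dots> = (\<Prod>e\<in>Basis. integral\<^sup>L lborel (phi1 a b (x \<bullet> e) (\<omega> \<bullet> e)))"
    by (rule integral_lborel_prod) (rule phi1_int[OF a])
  finally have "cmod (stft gauss_window (gauss_chirp a b) x \<omega>) = (\<Prod>e\<in>Basis. cmod (integral\<^sup>L lborel (phi1 a b (x \<bullet> e) (\<omega> \<bullet> e))))"
    by (simp add: prod_norm)
  also have "\<dots> = (\<Prod>e\<in>Basis. D powr (-1/4) * (exp (- pi * a / A * (\<omega> \<bullet> e)\<^sup>2) * exp (- pi * A / D * (x \<bullet> e + b / A * (\<omega> \<bullet> e))\<^sup>2)))"
    unfolding phi1_cmod[OF a] D_def A_def by (simp only: mult.assoc)
  also have "\<dots> = (D powr (-1/4)) ^ DIM('a) * (exp (\<Sum>e\<in>Basis. - pi * a / A * (\<omega> \<bullet> e)\<^sup>2) * exp (\<Sum>e\<in>Basis. - pi * A / D * (x \<bullet> e + b / A * (\<omega> \<bullet> e))\<^sup>2))"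
    by (simp only: prod.distrib prod_constant exp_sum[OF finite_Basis])
  also have "(\<Sum>e\<in>Basis. - pi * a / A * (\<omega> \<bullet> e)\<^sup>2) = - pi * a / A * (norm \<omega>)\<^sup>2"
    by (simp add: norm2_sum sum_distrib_left)
  also have "(\<Sum>e\<in>Basis. - pi * A / D * (x \<bullet> e + b / A * (\<omega> \<bullet> e))\<^sup>2) = - pi * A / D * (norm (x + (b / A) *\<^sub>R \<omega>))\<^sup>2"
    by (simp add: norm2_sum sum_distrib_left inner_add_left)
  also have "(D powr (-1/4)) ^ DIM('a) = D powr (- real DIM('a) / 4)"
    using D0 by (simp add: powr_power)
  finally show ?thesis unfolding D_def A_def by (simp only: mult.assoc)
qed




lemma gauss1_nn:
  fixes t :: real assumes t: "t > 0"
  shows "(\<integral>\<^sup>+u. ennreal (exp (- t * u\<^sup>2)) \<partial>lborel) = ennreal (sqrt (pi / t))"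
proof -
  have h: "has_bochner_integral lborel (\<lambda>u. exp (- t * u\<^sup>2 + 0 * u)) (sqrt (pi / t) * exp (0\<^sup>2 / (4 * t)))"
    by (rule gauss_real[OF t])
  then show ?thesis
    by (subst nn_integral_eq_integral) (auto simp: has_bochner_integral_iff)
qed

lemma gauss_nn:
  fixes s :: "'a::euclidean_space" and t :: real assumes t: "t > 0"
  shows "(\<integral>\<^sup>+x. ennreal (exp (- t * (norm (x - s))\<^sup>2)) \<partial>lborel) = ennreal ((pi / t) powr (real DIM('a) / 2))"
proof -
  have "(\<integral>\<^sup>+x. ennreal (exp (- t * (norm (x - s))\<^sup>2)) \<partial>lborel)
      = (\<integral>\<^sup>+x. ennreal (exp (- t * (norm (x - s))\<^sup>2)) \<partial>(distr lborel borel ((+) s)))"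
    by (simp add: lborel_distr_plus)
  also have "\<dots> = (\<integral>\<^sup>+x. ennreal (exp (- t * (norm (x::'a))\<^sup>2)) \<partial>lborel)"
    by (subst nn_integral_distr) auto
  also have "\<dots> = (\<integral>\<^sup>+x. (\<Prod>b\<in>Basis. ennreal (exp (- t * ((x::'a) \<bullet> b)\<^sup>2))) \<partial>lborel)"
    by (simp add: norm2_sum sum_distrib_left exp_sum prod_ennreal)
  also have "\<dots> = (\<Prod>b\<in>(Basis::'a set). ennreal (sqrt (pi / t)))"
    using gauss1_nn[OF t] by (subst nn_integral_lborel_prod) simp_all
  also have "\<dots> = ennreal ((sqrt (pi / t)) ^ DIM('a))" using t by (simp add: ennreal_power)
  also have "(sqrt (pi / t)) ^ DIM('a) = (pi / t) powr (real DIM('a) / 2)"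
    using t by (simp add: powr_half_sqrt[symmetric] powr_power)
  finally show ?thesis .
qed

lemma ess_sup_gauss:
  fixes s :: "'a::euclidean_space"
  assumes K: "K \<ge> 0" and c: "c > 0"
  shows "Inf {c'. AE x in lborel. ennreal (K * exp (- c * (norm (x - s))\<^sup>2)) \<le> c'} = ennreal K"
proof (rule antisym)
  show "Inf {c'. AE x in lborel. ennreal (K * exp (- c * (norm (x - s))\<^sup>2)) \<le> c'} \<le> ennreal K"
    using K c by (intro Inf_lower) (auto intro!: always_eventually mult_left_le)
next
  show "ennreal K \<le> Inf {c'. AE x in lborel. ennreal (K * exp (- c * (norm (x - s))\<^sup>2)) \<le> c'}"
  proof (rule Inf_greatest, rule ccontr)
    fix c' assume AE: "c' \<in> {c'. AE x in lborel. ennreal (K * exp (- c * (norm (x - s))\<^sup>2)) \<le> c'}"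
      and nle: "\<not> ennreal K \<le> c'"
    then have lt: "c' < ennreal K" by simp
    then obtain r where r: "c' = ennreal r" "0 \<le> r"
      by (cases c') (auto)
    have rK: "r < K" using lt r by (simp add: ennreal_less_iff)
    define S where "S = {x::'a. r < K * exp (- c * (norm (x - s))\<^sup>2)}"
    have "open S" unfolding S_def by (intro open_Collect_less continuous_intros)
    moreover have "s \<in> S" using rK by (simp add: S_def)
    ultimately obtain \<delta> where d: "\<delta> > 0" "ball s \<delta> \<subseteq> S" by (meson openE)
    from AE have "AE x in lborel. ennreal (K * exp (- c * (norm (x - s))\<^sup>2)) \<le> c'" by simp
    then obtain N where N: "{x \<in> space lborel. \<not> ennreal (K * exp (- c * (norm (x - s))\<^sup>2)) \<le> c'} \<subseteq> N"
      "N \<in> sets lborel" "emeasure lborel N = 0" by (auto elim!: AE_E)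
    have "ball s \<delta> \<subseteq> N"
    proof
      fix x assume "x \<in> ball s \<delta>"
      then have "x \<in> S" using d by auto
      then have "\<not> ennreal (K * exp (- c * (norm (x - s))\<^sup>2)) \<le> c'"
        using r by (auto simp: S_def ennreal_le_iff2 not_le)
      then show "x \<in> N" using N(1) by auto
    qed
    then have "emeasure lborel (ball s \<delta>) \<le> 0" using N by (metis emeasure_mono)
    moreover have "emeasure lborel (ball s \<delta>) = ennreal (measure lborel (ball s \<delta>))"
      using emeasure_lborel_ball_finite[of s \<delta>] by (simp add: emeasure_eq_ennreal_measure less_top)
    moreover have "measure lborel (ball s \<delta>) > 0" using d(1) by (rule content_ball_pos)
    ultimately show False by simp
  qed
qed

definition Mfac :: "ennreal \<Rightarrow> real \<Rightarrow> nat \<Rightarrow> real" where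
  "Mfac p c d = (if p = \<infinity> then 1 else (pi / (c * enn2real p)) powr (real d / (2 * enn2real p)))"

lemma Lp_gauss:
  fixes s :: "'a::euclidean_space"
  assumes K: "K \<ge> 0" and c: "c > 0" and p: "1 \<le> p"
  shows "Lp_norm p (\<lambda>x::'a. ennreal (K * exp (- c * (norm (x - s))\<^sup>2))) = ennreal (K * Mfac p c DIM('a))"
proof (cases "p = \<infinity>")
  case True
  then show ?thesis unfolding Lp_norm_def Mfac_def using ess_sup_gauss[OF K c] by simp
next
  case False
  define P where "P = enn2real p"
  have pP: "p = ennreal P" using False by (simp add: P_def ennreal_enn2real_if less_top)
  have P1: "P \<ge> 1" using p pP by (simp add: ennreal_ge_1)
  have cP: "c * P > 0" using c P1 by simp
  have ep: "epow (ennreal (K * exp (- c * (norm (x - s))\<^sup>2))) P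
      = ennreal (K powr P * exp (- (c * P) * (norm (x - s))\<^sup>2))" for x
    using K by (simp add: epow_def powr_mult exp_powr_real)
  have "(\<integral>\<^sup>+x. epow (ennreal (K * exp (- c * (norm (x - s))\<^sup>2))) P \<partial>lborel)
      = (\<integral>\<^sup>+x. ennreal (K powr P) * ennreal (exp (- (c * P) * (norm (x - s))\<^sup>2)) \<partial>lborel)"
    unfolding ep by (simp add: ennreal_mult)
  also have "\<dots> = ennreal (K powr P) * ennreal ((pi / (c * P)) powr (real DIM('a) / 2))"
    using gauss_nn[OF cP, of s] by (subst nn_integral_cmult) auto
  also have "\<dots> = ennreal (K powr P * (pi / (c * P)) powr (real DIM('a) / 2))"
    by (simp add: ennreal_mult)
  finally have I: "(\<integral>\<^sup>+x. epow (ennreal (K * exp (- c * (norm (x - s))\<^sup>2))) P \<partial>lborel) = \<dots>" .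
  have "(K powr P * (pi / (c * P)) powr (real DIM('a) / 2)) powr (1 / P) = K * (pi / (c * P)) powr (real DIM('a) / (2 * P))"
    using K P1 c by (simp add: powr_mult powr_powr)
  moreover have "K powr P * (pi / (c * P)) powr (real DIM('a) / 2) \<ge> 0" by simp
  ultimately have "epow (ennreal (K powr P * (pi / (c * P)) powr (real DIM('a) / 2))) (1 / P) = ennreal (K * (pi / (c * P)) powr (real DIM('a) / (2 * P)))"
    unfolding epow_def by simp
  moreover have "Lp_norm p (\<lambda>x::'a. ennreal (K * exp (- c * (norm (x - s))\<^sup>2))) =
     epow (\<integral>\<^sup>+x. epow (ennreal (K * exp (- c * (norm (x - s))\<^sup>2))) P \<partial>lborel) (1 / P)"
    unfolding Lp_norm_def using False by (simp add: P_def)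
  ultimately show ?thesis unfolding I Mfac_def using False by (simp add: P_def)
qed

lemma Mfac_pos: "Mfac p c d > 0" if "c > 0" "1 \<le> p" for p c d
proof -
  have "p \<noteq> \<infinity> \<Longrightarrow> enn2real p > 0"
  proof -
    assume "p \<noteq> \<infinity>"
    then have "enn2real 1 \<le> enn2real p" using that(2) by (intro enn2real_mono) (auto simp: less_top)
    then show ?thesis by simp
  qed
  then show ?thesis using that by (auto simp: Mfac_def)
qed

lemma mod_norm_eq:
  assumes a: "a > 0" and p: "1 \<le> p" and q: "1 \<le> q"
  shows "mod_norm p q (gauss_window :: 'a::euclidean_space \<Rightarrow> complex) (gauss_chirp a b) =
    ennreal (((a + 1)\<^sup>2 + b\<^sup>2) powr (- real DIM('a) / 4)
      * Mfac p (pi * (a * (a + 1) + b\<^sup>2) / ((a + 1)\<^sup>2 + b\<^sup>2)) DIM('a)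
      * Mfac q (pi * a / (a * (a + 1) + b\<^sup>2)) DIM('a))"
proof -
  define D where "D = (a + 1)\<^sup>2 + b\<^sup>2"
  define A where "A = a * (a + 1) + b\<^sup>2"
  have D0: "D > 0" using a by (simp add: D_def add_pos_nonneg)
  have A0: "A > 0" using a by (simp add: A_def add_pos_nonneg)
  define c1 where "c1 = pi * A / D"
  define c2 where "c2 = pi * a / A"
  have c1: "c1 > 0" using A0 D0 by (simp add: c1_def)
  have c2: "c2 > 0" using A0 a by (simp add: c2_def)
  define K where "K = D powr (- real DIM('a) / 4)"
  have K: "K \<ge> 0" by (simp add: K_def)
  have inner: "Lp_norm p (\<lambda>x. ennreal (cmod (stft gauss_window (gauss_chirp a b) x \<omega>))) =
      ennreal ((K * Mfac p c1 DIM('a)) * exp (- c2 * (norm (\<omega> - 0))\<^sup>2))" for \<omega> :: 'a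
  proof -
    have "(\<lambda>x. ennreal (cmod (stft gauss_window (gauss_chirp a b) x \<omega>))) =
        (\<lambda>x. ennreal ((K * exp (- c2 * (norm \<omega>)\<^sup>2)) * exp (- c1 * (norm (x - (- (b / A) *\<^sub>R \<omega>)))\<^sup>2)))"
      unfolding stft_cmod[OF a] K_def c1_def c2_def D_def[symmetric] A_def[symmetric]
      by (simp add: mult_ac)
    moreover have "Lp_norm p (\<lambda>x::'a. ennreal ((K * exp (- c2 * (norm \<omega>)\<^sup>2)) * exp (- c1 * (norm (x - (- (b / A) *\<^sub>R \<omega>)))\<^sup>2)))
       = ennreal ((K * exp (- c2 * (norm \<omega>)\<^sup>2)) * Mfac p c1 DIM('a))"
      using K by (intro Lp_gauss c1 p) simp
    ultimately show ?thesis by (simp add: mult_ac)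
  qed
  have "mod_norm p q (gauss_window :: 'a \<Rightarrow> complex) (gauss_chirp a b) =
      Lp_norm q (\<lambda>\<omega>::'a. ennreal ((K * Mfac p c1 DIM('a)) * exp (- c2 * (norm (\<omega> - 0))\<^sup>2)))"
    unfolding mod_norm_def inner ..
  also have "\<dots> = ennreal ((K * Mfac p c1 DIM('a)) * Mfac q c2 DIM('a))"
    using K c1 p by (intro Lp_gauss c2 q) (simp add: Mfac_pos less_imp_le)
  finally show ?thesis unfolding K_def c1_def c2_def D_def A_def .
qed

definition kfac :: "ennreal \<Rightarrow> nat \<Rightarrow> real" where
  "kfac p d = (if p = \<infinity> then 1 else enn2real p powr (- real d / (2 * enn2real p)))"

lemma enn2real_inverse:
  assumes p: "1 \<le> p"
  shows "enn2real (inverse p) = (if p = \<infinity> then 0 else 1 / enn2real p)"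
proof (cases "p = \<infinity>")
  case False
  define P where "P = enn2real p"
  have pP: "p = ennreal P" using False by (simp add: P_def ennreal_enn2real_if less_top)
  have "P \<ge> 1" using p pP by (simp add: ennreal_ge_1)
  then have "inverse p = ennreal (inverse P)" unfolding pP by (intro inverse_ennreal) simp
  then show ?thesis using False \<open>P \<ge> 1\<close> by (simp add: P_def inverse_eq_divide)
qed simp

lemma Mfac_form:
  assumes p: "1 \<le> p" and X: "X > 0" and Y: "Y > 0"
  shows "Mfac p (pi * X / Y) d = kfac p d * Y powr (real d * enn2real (inverse p) / 2) * X powr (- real d * enn2real (inverse p) / 2)"
proof (cases "p = \<infinity>")
  case True then show ?thesis using X Y by (simp add: Mfac_def kfac_def)
next
  case False
  define P where "P = enn2real p"
  have pP: "p = ennreal P" using False by (simp add: P_def ennreal_enn2real_if less_top)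
  have P1: "P \<ge> 1" using p pP by (simp add: ennreal_ge_1)
  have ip: "enn2real (inverse p) = 1 / P" using enn2real_inverse[OF p] False by (simp add: P_def)
  have "pi / (pi * X / Y * P) = Y / X / P" using X Y P1 by (simp add: field_simps)
  then have "Mfac p (pi * X / Y) d = (Y / X / P) powr (real d / (2 * P))"
    using False by (simp add: Mfac_def P_def)
  also have "\<dots> = Y powr (real d / (2 * P)) / X powr (real d / (2 * P)) / P powr (real d / (2 * P))"
    using X Y P1 by (simp only: powr_divide less_imp_le divide_nonneg_nonneg)
  also have "\<dots> = P powr (- (real d / (2 * P))) * Y powr (real d / (2 * P)) * X powr (- (real d / (2 * P)))"
    by (simp only: powr_minus divide_inverse mult_ac)
  also have "\<dots> = P powr (- real d / (2 * P)) * Y powr (real d / (2 * P)) * X powr (- real d / (2 * P))"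
    by (simp only: minus_divide_left)
  finally show ?thesis unfolding ip using False by (simp add: kfac_def P_def ac_simps)
qed

lemma kfac_pos: "1 \<le> p \<Longrightarrow> kfac p d > 0"
proof -
  assume p: "1 \<le> p"
  have "p \<noteq> \<infinity> \<Longrightarrow> enn2real p > 0"
  proof -
    assume "p \<noteq> \<infinity>"
    then have "enn2real 1 \<le> enn2real p" using p by (intro enn2real_mono) (auto simp: less_top)
    then show ?thesis by simp
  qed
  then show ?thesis by (auto simp: kfac_def)
qed

lemma N_eq:
  assumes a: "a > 0" and p: "1 \<le> p" and q: "1 \<le> q"
  defines "d \<equiv> real DIM('a::euclidean_space)" and "ip \<equiv> enn2real (inverse p)" and "iq \<equiv> enn2real (inverse q)"
  shows "mod_norm p q (gauss_window :: 'a \<Rightarrow> complex) (gauss_chirp a b) =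
     ennreal ((kfac p DIM('a) * kfac q DIM('a)) *
      (((a + 1)^2 + b^2) powr (d / 2 * (ip - 1 / 2)) /
             (a powr (d / 2 * iq) * (a * (a + 1) + b^2) powr (d / 2 * (ip - iq)))))"
proof -
  define D where "D = (a + 1)\<^sup>2 + b\<^sup>2"
  define A where "A = a * (a + 1) + b\<^sup>2"
  have D0: "D > 0" using a by (simp add: D_def add_pos_nonneg)
  have A0: "A > 0" using a by (simp add: A_def add_pos_nonneg)
  have "mod_norm p q (gauss_window :: 'a \<Rightarrow> complex) (gauss_chirp a b) =
    ennreal (D powr (- d / 4) * (kfac p DIM('a) * D powr (d * ip / 2) * A powr (- d * ip / 2))
      * (kfac q DIM('a) * A powr (d * iq / 2) * a powr (- d * iq / 2)))"
    unfolding mod_norm_eq[OF a p q] D_def[symmetric] A_def[symmetric]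
      Mfac_form[OF p A0 D0] Mfac_form[OF q a A0] d_def ip_def iq_def ..
  also have "D powr (- d / 4) * (kfac p DIM('a) * D powr (d * ip / 2) * A powr (- d * ip / 2))
      * (kfac q DIM('a) * A powr (d * iq / 2) * a powr (- d * iq / 2))
     = (kfac p DIM('a) * kfac q DIM('a)) * (D powr (- d / 4 + d * ip / 2) * A powr (- d * ip / 2 + d * iq / 2) * a powr (- d * iq / 2))"
    by (simp only: powr_add mult_ac)
  also have "D powr (- d / 4 + d * ip / 2) * A powr (- d * ip / 2 + d * iq / 2) * a powr (- d * iq / 2)
     = D powr (d / 2 * (ip - 1 / 2)) / (a powr (d / 2 * iq) * A powr (d / 2 * (ip - iq)))"
  proof -
    have e1: "- d / 4 + d * ip / 2 = d / 2 * (ip - 1 / 2)" by (simp add: algebra_simps)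
    have e2: "- d * ip / 2 + d * iq / 2 = - (d / 2 * (ip - iq))" by (simp add: algebra_simps diff_divide_distrib)
    have e3: "- d * iq / 2 = - (d / 2 * iq)" by simp
    show ?thesis unfolding e1 e2 e3 powr_minus by (simp only: divide_inverse inverse_mult_distrib mult_ac)
  qed
  finally show ?thesis unfolding D_def A_def .
qed

theorem lemma2p4:
  fixes p q :: ennreal
  assumes "1 \<le> p" and "1 \<le> q"
  shows "\<exists>C>0. \<forall>a>0. \<forall>b.
    (let d = real DIM('a::euclidean_space); ip = enn2real (inverse p); iq = enn2real (inverse q);
         R = ((a + 1)^2 + b^2) powr (d / 2 * (ip - 1 / 2)) /
             (a powr (d / 2 * iq) * (a * (a + 1) + b^2) powr (d / 2 * (ip - iq)));
         N = mod_norm p q (gauss_window :: 'a \<Rightarrow> complex) (gauss_chirp a b)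
     in N \<le> ennreal (C * R) \<and> ennreal R \<le> ennreal C * N)"
proof -
  define k where "k = kfac p DIM('a) * kfac q DIM('a)"
  have k0: "k > 0" unfolding k_def using kfac_pos assms by (simp add: mult_pos_pos)
  define C where "C = max k (1 / k)"
  have C0: "C > 0" using k0 by (simp add: C_def)
  have Ck: "k \<le> C" "1 \<le> C * k" using k0 by (auto simp: C_def max_def field_simps)
  show ?thesis
  proof (intro exI[of _ C] conjI allI impI C0)
    fix a b :: real assume a: "a > 0"
    define R where "R = ((a + 1)^2 + b^2) powr (real DIM('a) / 2 * (enn2real (inverse p) - 1 / 2)) /
             (a powr (real DIM('a) / 2 * enn2real (inverse q)) * (a * (a + 1) + b^2) powr (real DIM('a) / 2 * (enn2real (inverse p) - enn2real (inverse q))))"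
    have R0: "R \<ge> 0" unfolding R_def by simp
    have N: "mod_norm p q (gauss_window :: 'a \<Rightarrow> complex) (gauss_chirp a b) = ennreal (k * R)"
      unfolding R_def k_def using N_eq[OF a assms] by simp
    have 1: "ennreal (k * R) \<le> ennreal (C * R)" using Ck R0 by (intro ennreal_leI mult_right_mono)
    have "R \<le> C * (k * R)" using Ck R0 by (metis mult.assoc mult_le_cancel_right1 less_eq_real_def not_le)
    moreover have "ennreal C * ennreal (k * R) = ennreal (C * (k * R))" using C0 k0 R0 by (simp add: ennreal_mult)
    ultimately have 2: "ennreal R \<le> ennreal C * ennreal (k * R)" by (simp add: ennreal_leI)
    show "let d = real DIM('a); ip = enn2real (inverse p); iq = enn2real (inverse q);
         R = ((a + 1)^2 + b^2) powr (d / 2 * (ip - 1 / 2)) /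
             (a powr (d / 2 * iq) * (a * (a + 1) + b^2) powr (d / 2 * (ip - iq)));
         N = mod_norm p q (gauss_window :: 'a \<Rightarrow> complex) (gauss_chirp a b)
     in N \<le> ennreal (C * R) \<and> ennreal R \<le> ennreal C * N"
      unfolding Let_def R_def[symmetric] N using 1 2 by simp
  qed
qed


end
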